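(* Let $\phi_1,\phi_2\in D=\{z\in\mathbb{C};|z|<1\}$ and let $Z$ be a random variable on $\partial D=\{z\in\mathbb{C};|z|=1\}$ with density, with respect to arc length, $$f(z)=\frac{1}{2\pi}\frac{|1-\phi_1\overline{\phi_2}|^2}{1-|\phi_1\overline{\phi_2}|^2}\frac{1-|\phi_1|^2}{|z-\phi_1|^2}\frac{1-|\phi_2|^2}{|z-\phi_2|^2},\qquad z\in\partial D.$$ Then for every nonnegative integer $n$ (the $n$th trigonometric moment), $$E(Z^n)=\begin{cases}\dfrac{(1-|\phi_2|^2)(1-\overline{\phi_1}\phi_2)\phi_1^{n+1}-(1-|\phi_1|^2)(1-\phi_1\overline{\phi_2})\phi_2^{n+1}}{(\phi_1-\phi_2)(1-|\phi_1\overline{\phi_2}|^2)}, & \phi_1\ne\phi_2,\\[2ex] \dfrac{1+n+(1-n)|\phi_1|^2}{1+|\phi_1|^2}\phi_1^n, & \phi_1=\phi_2.\end{cases}$$ *)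

theory Defs
  imports "HOL-Probability.Probability"
begin

definition arc_length_circle :: "complex measure" where
  "arc_length_circle = distr (restrict_space lborel {0..<2*pi}) borel cis"

definition circ_density :: "complex \<Rightarrow> complex \<Rightarrow> complex \<Rightarrow> real" where
  "circ_density \<phi>1 \<phi>2 z =
     1 / (2*pi) * (cmod (1 - \<phi>1 * cnj \<phi>2))^2 / (1 - (cmod (\<phi>1 * cnj \<phi>2))^2)
     * (1 - (cmod \<phi>1)^2) / (cmod (z - \<phi>1))^2
     * (1 - (cmod \<phi>2)^2) / (cmod (z - \<phi>2))^2"

end

theory Submission imports Defs "HOL-Complex_Analysis.Complex_Analysis" begin
lemma circ_to_int:
  fixes \<Phi> G :: "complex \<Rightarrow> complex"
  assumes G: "(G has_contour_integral I) (circlepath 0 1)"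
    and eq: "\<And>z. cmod z = 1 \<Longrightarrow> \<Phi> z = G z * z * \<i>"
  shows "((\<lambda>t. \<Phi> (cis t)) has_integral I) {0..2*pi}"
proof -
  have h0: "((\<lambda>x. G (circlepath 0 1 x) * vector_derivative (circlepath 0 1) (at x within {0..1})) has_integral I) {0..1}"
    using G by (simp add: has_contour_integral_def)
  have h1: "((\<lambda>u. 2*pi * \<Phi> (cis (2*pi*u))) has_integral I) (cbox 0 1)"
    unfolding cbox_interval
  proof (rule has_integral_eq[OF _ h0])
    fix x :: real assume x: "x \<in> {0..1}"
    have c: "cis (2*pi*x) = exp (2 * of_real pi * \<i> * of_real x)"
      by (simp add: cis_conv_exp mult_ac)
    have "cmod (cis (2*pi*x)) = 1" by simp
    from eq[OF this] show "G (circlepath 0 1 x) * vector_derivative (circlepath 0 1) (at x within {0..1}) =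
         complex_of_real (2 * pi) * \<Phi> (cis (2 * pi * x))"
      using x by (subst vector_derivative_circlepath01) (auto simp add: circlepath cis_conv_exp mult_ac)
  qed
  have "((\<lambda>x. 2*pi * \<Phi> (cis (2*pi*((1/(2*pi)) *\<^sub>R x + 0)))) has_integral (I /\<^sub>R (1/(2*pi)) ^ DIM(real)))
           (cbox ((0 - 0) /\<^sub>R (1/(2*pi))) ((1 - 0) /\<^sub>R (1/(2*pi))))"
    by (rule has_integral_affinity'[OF h1]) simp
  hence "((\<lambda>x. 2*pi * \<Phi> (cis x)) has_integral (2*pi*I)) {0..2*pi}"
    by (simp add: cbox_interval scaleR_conv_of_real)
  hence "((\<lambda>x. (1/(2*pi)) * (2*pi * \<Phi> (cis x))) has_integral (1/(2*pi)) * (2*pi*I)) {0..2*pi}"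
    by (rule has_integral_mult_right)
  thus ?thesis by simp
qed

lemma cis_neq: "cmod \<phi> < 1 \<Longrightarrow> cis t \<noteq> \<phi>"
  by auto

lemma one_minus_neq: "cmod \<phi> < 1 \<Longrightarrow> cmod z \<le> 1 \<Longrightarrow> 1 - cnj \<phi> * z \<noteq> 0"
proof
  assume "cmod \<phi> < 1" "cmod z \<le> 1" "1 - cnj \<phi> * z = 0"
  hence "cnj \<phi> * z = 1" by simp
  hence "cmod \<phi> * cmod z = 1" by (metis complex_mod_cnj norm_mult norm_one)
  moreover have "cmod \<phi> * cmod z \<le> cmod \<phi>"
    using \<open>cmod z \<le> 1\<close> by (simp add: mult_left_le)
  ultimately show False using \<open>cmod \<phi> < 1\<close> by simp
qed

lemma expect_eq:
  fixes M :: "'a measure" and Z :: "'a \<Rightarrow> complex" and d :: "complex \<Rightarrow> real"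
  assumes dist: "distributed M arc_length_circle Z (\<lambda>z. ennreal (d z))"
    and dnn: "\<And>z. d z \<ge> 0"
    and dm: "d \<in> borel_measurable borel"
    and dc: "continuous_on {0..2*pi} (\<lambda>t. d (cis t))"
    and I: "((\<lambda>t. of_real (d (cis t)) * cis t ^ n) has_integral I) {0..2*pi}"
  shows "integral\<^sup>L M (\<lambda>\<omega>. Z \<omega> ^ n) = I"
proof -
  have D: "distr M arc_length_circle Z = density arc_length_circle (\<lambda>z. ennreal (d z))"
    and Zm: "Z \<in> measurable M arc_length_circle"
    using dist by (auto simp: distributed_def)
  note dm[measurable]
  have cisb[measurable]: "cis \<in> borel_measurable borel"
    by (simp add: borel_measurable_continuous_onI continuous_on_cis continuous_on_id)
  have sa: "sets arc_length_circle = sets borel" by (simp add: arc_length_circle_def)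
  have cism: "cis \<in> borel_measurable (restrict_space lborel {0..<2*pi})"
    by (rule measurable_restrict_space1) (simp add: borel_measurable_continuous_onI continuous_on_cis continuous_on_id)
  have "integral\<^sup>L M (\<lambda>\<omega>. Z \<omega> ^ n) = integral\<^sup>L (distr M arc_length_circle Z) (\<lambda>z. z ^ n)"
    by (rule integral_distr[symmetric, OF Zm]) (simp add: measurable_cong_sets[OF sa refl])
  also have "\<dots> = integral\<^sup>L arc_length_circle (\<lambda>z. d z *\<^sub>R z ^ n)"
    unfolding D
    by (rule integral_density) (auto simp: measurable_cong_sets[OF sa refl] dm dnn)
  also have "\<dots> = integral\<^sup>L (restrict_space lborel {0..<2*pi}) (\<lambda>t. d (cis t) *\<^sub>R cis t ^ n)"
    unfolding arc_length_circle_def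
    by (rule integral_distr[OF cism]) measurable
  also have "\<dots> = integral\<^sup>L lborel (\<lambda>t. indicator {0..<2*pi} t *\<^sub>R (d (cis t) *\<^sub>R cis t ^ n))"
    by (rule integral_restrict_space) simp
  also have "\<dots> = integral\<^sup>L lborel (\<lambda>t. indicator {0..2*pi} t *\<^sub>R (d (cis t) *\<^sub>R cis t ^ n))"
  proof (rule integral_cong_AE)
    show "AE x in lborel. indicator {0..<2*pi} x *\<^sub>R (d (cis x) *\<^sub>R cis x ^ n) =
        indicator {0..2*pi} x *\<^sub>R (d (cis x) *\<^sub>R cis x ^ n)"
      using AE_lborel_singleton[of "2*pi"] by eventually_elim (auto simp: indicator_def)
  qed (measurable; fail)+
  finally have e: "integral\<^sup>L M (\<lambda>\<omega>. Z \<omega> ^ n) = integral\<^sup>L lborel (\<lambda>t. indicator {0..2*pi} t *\<^sub>R (d (cis t) *\<^sub>R cis t ^ n))" .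
  have "integrable lborel (\<lambda>t. indicator {0..2*pi} t *\<^sub>R (d (cis t) *\<^sub>R cis t ^ n))"
    by (rule borel_integrable_compact) (simp, intro continuous_on_scaleR dc continuous_intros)
  note hi = has_integral_integral_lborel[OF this]
  have ind: "(\<lambda>t. indicator {0..2*pi} t *\<^sub>R (d (cis t) *\<^sub>R cis t ^ n)) = (\<lambda>t. if t \<in> {0..2*pi} then d (cis t) *\<^sub>R cis t ^ n else 0)"
    by (auto simp: indicator_def)
  have "((\<lambda>t. d (cis t) *\<^sub>R cis t ^ n) has_integral integral\<^sup>L lborel (\<lambda>t. indicator {0..2*pi} t *\<^sub>R (d (cis t) *\<^sub>R cis t ^ n))) {0..2*pi}"
    using hi unfolding ind has_integral_restrict_UNIV .
  hence "((\<lambda>t. of_real (d (cis t)) * cis t ^ n) has_integral integral\<^sup>L lborel (\<lambda>t. indicator {0..2*pi} t *\<^sub>R (d (cis t) *\<^sub>R cis t ^ n))) {0..2*pi}"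
    by (simp add: scaleR_conv_of_real)
  with I e show ?thesis using has_integral_unique by metis
qed

lemma norm_sq_c: "(complex_of_real (cmod z))^2 = z * cnj z"
  using complex_norm_square[of z] by simp


lemma alg_gen:
  fixes aa bb cc dd ee k u v :: complex
  assumes "aa \<noteq> 0" "bb \<noteq> 0" "cc \<noteq> 0" "dd \<noteq> 0" "ee \<noteq> 0" "k \<noteq> 0"
  shows "aa*bb*(cc*dd)/ee * (u/(aa*cc) - v/(dd*bb))/k = (bb*dd*u - aa*cc * v)/(k*ee)"
  using assms by (simp add: field_simps)

lemma alg_gen_e:
  fixes aa ff m w p x :: complex
  assumes "aa \<noteq> 0" "ff \<noteq> 0"
  shows "aa*aa*(aa*aa)/(aa*ff) * ((m*w*aa^2 + (p*w)*(2*aa*x))/((aa^2)^2)) = (m*aa + 2*p*x) * w / ff"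
  using assms by (simp add: field_simps power2_eq_square)


lemma alg_pf:
  fixes P Q R S c w :: complex
  assumes "P \<noteq> 0" "Q \<noteq> 0" "R \<noteq> 0" "S \<noteq> 0" "P \<noteq> Q"
  shows "c*w/(P*R*(Q*S)) = c/(Q-P)*(w/(R*S)/P - w/(R*S)/Q)"
proof -
  have "Q - P \<noteq> 0" using assms by simp
  thus ?thesis using assms by (simp add: field_simps)
qed

lemma alg_pf_e:
  fixes P R c w :: complex
  assumes "P \<noteq> 0" "R \<noteq> 0"
  shows "c*w/(P*R*(P*R)) = c*(w/R^2/P^Suc 1)"
  using assms by (simp add: field_simps power2_eq_square)

lemma key_circ:
  assumes "cmod z = 1"
  shows "(z - \<phi>) * (1 - cnj \<phi> * z) = complex_of_real ((cmod (z - \<phi>))^2) * z"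
proof -
  have zz: "cnj z * z = 1" using complex_norm_square[of z] assms by (simp add: mult.commute)
  have "complex_of_real ((cmod (z - \<phi>))^2) * z = (z - \<phi>) * (cnj z * z - cnj \<phi> * z)"
    by (simp only: complex_norm_square) (simp add: algebra_simps)
  thus ?thesis by (simp add: zz)
qed

theorem theorem4:
  fixes M :: "'a measure" and Z :: "'a \<Rightarrow> complex"
    and \<phi>1 \<phi>2 :: complex and n :: nat
  assumes "cmod \<phi>1 < 1" and "cmod \<phi>2 < 1"
    and "prob_space M"
    and "distributed M arc_length_circle Z (\<lambda>z. ennreal (circ_density \<phi>1 \<phi>2 z))"
  shows "prob_space.expectation M (\<lambda>\<omega>. Z \<omega> ^ n) =
    (if \<phi>1 \<noteq> \<phi>2 then
       ((1 - (cmod \<phi>2)^2) * (1 - cnj \<phi>1 * \<phi>2) * \<phi>1 ^ (n+1)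
         - (1 - (cmod \<phi>1)^2) * (1 - \<phi>1 * cnj \<phi>2) * \<phi>2 ^ (n+1))
       / ((\<phi>1 - \<phi>2) * (1 - (cmod (\<phi>1 * cnj \<phi>2))^2))
     else
       (1 + of_nat n + (1 - of_nat n) * (cmod \<phi>1)^2) / (1 + (cmod \<phi>1)^2) * \<phi>1 ^ n)"
proof -
  define a1 where "a1 = cnj \<phi>1"
  define a2 where "a2 = cnj \<phi>2"
  define C :: real where "C = (1 - (cmod \<phi>1)^2) * (1 - (cmod \<phi>2)^2) * (cmod (1 - \<phi>1 * cnj \<phi>2))^2
        / (2*pi*(1 - (cmod (\<phi>1 * cnj \<phi>2))^2))"
  have cd: "\<And>z. circ_density \<phi>1 \<phi>2 z = C / ((cmod (z-\<phi>1))^2 * (cmod (z-\<phi>2))^2)"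
    by (simp add: circ_density_def C_def mult_ac)
  have n12: "cmod (\<phi>1 * cnj \<phi>2) < 1"
  proof -
    have "cmod \<phi>1 * cmod \<phi>2 \<le> cmod \<phi>1" using assms(2) by (simp add: mult_left_le)
    thus ?thesis using assms(1) by (simp add: norm_mult)
  qed
  have sq1: "(cmod (\<phi>1 * cnj \<phi>2))^2 < 1" "(cmod \<phi>1)^2 < 1" "(cmod \<phi>2)^2 < 1"
    using n12 assms(1,2) by (simp_all add: abs_square_less_1)
  have dnn: "\<And>z. circ_density \<phi>1 \<phi>2 z \<ge> 0"
    unfolding circ_density_def using sq1
    by (intro mult_nonneg_nonneg divide_nonneg_nonneg) auto
  have dm: "circ_density \<phi>1 \<phi>2 \<in> borel_measurable borel"
    unfolding circ_density_def[abs_def] by measurable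
  have dc: "continuous_on {0..2*pi} (\<lambda>t. circ_density \<phi>1 \<phi>2 (cis t))"
    unfolding circ_density_def using sq1 cis_neq[OF assms(1)] cis_neq[OF assms(2)]
    by (intro continuous_intros) auto
  define \<Phi> where "\<Phi> z = complex_of_real (circ_density \<phi>1 \<phi>2 z) * z ^ n" for z
  define G0 where "G0 z = - \<i> * of_real C * z^(n+1) / ((z-\<phi>1)*(1-a1*z)*((z-\<phi>2)*(1-a2*z)))" for z
  have PG0: "\<Phi> z = G0 z * z * \<i>" if z: "cmod z = 1" for z
  proof -
    have z0: "z \<noteq> 0" using z by auto
    have ne1: "cmod (z - \<phi>1) \<noteq> 0" "cmod (z - \<phi>2) \<noteq> 0" using z assms(1,2) by auto
    have "G0 z = - \<i> * of_real C * z^(n+1) / ((of_real ((cmod (z-\<phi>1))^2) * z) * (of_real ((cmod (z-\<phi>2))^2) * z))"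
      unfolding G0_def a1_def a2_def key_circ[OF z] ..
    thus ?thesis unfolding \<Phi>_def cd using z0 ne1
      by (simp add: field_simps)
  qed
  have twopiC: "complex_of_real (2*pi*C) = (1-a1*\<phi>1)*(1-a2*\<phi>2)*((1-a2*\<phi>1)*(1-a1*\<phi>2))/(1-\<phi>1*a1*(\<phi>2*a2))"
  proof -
    have "2*pi*C = (1 - (cmod \<phi>1)^2) * (1 - (cmod \<phi>2)^2) * (cmod (1 - \<phi>1 * cnj \<phi>2))^2
        / (1 - (cmod (\<phi>1 * cnj \<phi>2))^2)" unfolding C_def by simp
    hence "complex_of_real (2*pi*C) = (1 - (of_real (cmod \<phi>1))^2) * (1 - (of_real (cmod \<phi>2))^2) * (of_real (cmod (1 - \<phi>1 * cnj \<phi>2)))^2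
        / (1 - (of_real (cmod (\<phi>1 * cnj \<phi>2)))^2)" by simp
    also have "\<dots> = (1-a1*\<phi>1)*(1-a2*\<phi>2)*((1-a2*\<phi>1)*(1-a1*\<phi>2))/(1-\<phi>1*a1*(\<phi>2*a2))"
      unfolding norm_sq_c a1_def a2_def by (simp add: algebra_simps)
    finally show ?thesis .
  qed
  have ne_a: "1 - a1*z \<noteq> 0" "1 - a2*z \<noteq> 0" if "cmod z \<le> 1" for z
    unfolding a1_def a2_def using one_minus_neq assms(1,2) that by auto
  have ee0: "1 - \<phi>1*a1*(\<phi>2*a2) \<noteq> 0"
  proof -
    have "1 - \<phi>1*a1*(\<phi>2*a2) = complex_of_real (1 - (cmod (\<phi>1 * cnj \<phi>2))^2)"
      unfolding of_real_diff of_real_1 complex_norm_square a1_def a2_def by (simp add: algebra_simps)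
    moreover have "complex_of_real (1 - (cmod (\<phi>1 * cnj \<phi>2))^2) \<noteq> 0"
      using sq1(1) by (subst of_real_eq_0_iff) linarith
    ultimately show ?thesis by simp
  qed
  show ?thesis
  proof (cases "\<phi>1 = \<phi>2")
    case False
    define h where "h z = z^(n+1)/((1-a1*z)*(1-a2*z))" for z
    have hol: "h holomorphic_on cball 0 1" unfolding h_def using ne_a by (intro holomorphic_intros) auto
    have c1: "((\<lambda>u. h u/(u-\<phi>1)) has_contour_integral (2 * of_real pi*\<i>*h \<phi>1)) (circlepath 0 1)"
      by (rule Cauchy_integral_circlepath_simple[OF hol]) (simp add: assms(1))
    have c2: "((\<lambda>u. h u/(u-\<phi>2)) has_contour_integral (2 * of_real pi*\<i>*h \<phi>2)) (circlepath 0 1)"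
      by (rule Cauchy_integral_circlepath_simple[OF hol]) (simp add: assms(2))
    define K where "K = -\<i>* of_real C/(\<phi>1-\<phi>2)"
    have ci: "((\<lambda>u. K*(h u/(u-\<phi>1) - h u/(u-\<phi>2))) has_contour_integral
        K*(2 * of_real pi*\<i>*h \<phi>1 - 2 * of_real pi*\<i>*h \<phi>2)) (circlepath 0 1)"
      by (rule has_contour_integral_lmul[OF has_contour_integral_diff[OF c1 c2]])
    have "((\<lambda>t. \<Phi> (cis t)) has_integral K*(2 * of_real pi*\<i>*h \<phi>1 - 2 * of_real pi*\<i>*h \<phi>2)) {0..2*pi}"
    proof (rule circ_to_int[OF ci])
      fix z :: complex assume z: "cmod z = 1"
      have "z - \<phi>1 \<noteq> 0" "z-\<phi>2 \<noteq> 0" using z assms(1,2) by auto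
      moreover have "1 - a1*z \<noteq> 0" "1 - a2*z \<noteq> 0" using ne_a z by auto
      moreover have "\<phi>1 - \<phi>2 \<noteq> 0" using False by simp
      ultimately have "G0 z = K*(h z/(z-\<phi>1) - h z/(z-\<phi>2))"
        unfolding G0_def K_def h_def
        using alg_pf[of "z-\<phi>1" "z-\<phi>2" "1-a1*z" "1-a2*z" "-\<i> * of_real C" "z^(n+1)"] by simp
      thus "\<Phi> z = K*(h z/(z-\<phi>1) - h z/(z-\<phi>2)) * z * \<i>"
        unfolding PG0[OF z] by simp
    qed
    hence E: "integral\<^sup>L M (\<lambda>\<omega>. Z \<omega> ^ n) = K*(2 * of_real pi*\<i>*h \<phi>1 - 2 * of_real pi*\<i>*h \<phi>2)"
      unfolding \<Phi>_def by (rule expect_eq[OF assms(4) dnn dm dc])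
    have "K*(2 * of_real pi*\<i>*h \<phi>1 - 2 * of_real pi*\<i>*h \<phi>2) = complex_of_real (2*pi*C) * (h \<phi>1 - h \<phi>2)/(\<phi>1-\<phi>2)"
      unfolding K_def using False by (simp add: field_simps)
    also have "\<dots> = ((1-a2*\<phi>2)*(1-a1*\<phi>2)*\<phi>1^(n+1) - (1-a1*\<phi>1)*(1-a2*\<phi>1)*\<phi>2^(n+1))/((\<phi>1-\<phi>2)*(1-\<phi>1*a1*(\<phi>2*a2)))"
      unfolding twopiC h_def
      by (rule alg_gen) (use ne_a[of \<phi>1] ne_a[of \<phi>2] assms(1,2) ee0 False in auto)
    also have "\<dots> = ((1 - (cmod \<phi>2)^2) * (1 - cnj \<phi>1 * \<phi>2) * \<phi>1 ^ (n+1)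
         - (1 - (cmod \<phi>1)^2) * (1 - \<phi>1 * cnj \<phi>2) * \<phi>2 ^ (n+1))
       / ((\<phi>1 - \<phi>2) * (1 - (cmod (\<phi>1 * cnj \<phi>2))^2))"
      unfolding a1_def a2_def of_real_diff of_real_1 complex_norm_square by (simp add: algebra_simps)
    finally show ?thesis using E False by simp
  next
    case True
    have a21: "a2 = a1" unfolding a1_def a2_def True ..
    define h where "h z = z^(n+1)/(1-a1*z)^2" for z
    have hol: "h holomorphic_on cball 0 1" unfolding h_def using ne_a by (intro holomorphic_intros) auto
    define Dv where "Dv = (of_nat (n+1)*\<phi>1^n*(1-a1*\<phi>1)^2 + \<phi>1^(n+1)*(2*(1-a1*\<phi>1)*a1))/((1-a1*\<phi>1)^2)^2"
    have pw: "n \<noteq> 0 \<Longrightarrow> \<phi>1 * \<phi>1^(n - Suc 0) = \<phi>1^n" by (cases n) auto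
    have hd: "(h has_field_derivative Dv) (at \<phi>1)"
      unfolding h_def Dv_def using ne_a(1)[of \<phi>1] assms(1) pw
      by (auto intro!: derivative_eq_intros simp: field_simps) (metis neq0_conv)
    have Ce: "((\<lambda>u. h u/(u-\<phi>1)^Suc 1) has_contour_integral (2*pi*\<i>)/fact 1 * (deriv^^1) h \<phi>1) (circlepath 0 1)"
      by (rule Cauchy_has_contour_integral_higher_derivative_circlepath)
         (use hol assms(1) in \<open>auto intro: holomorphic_on_imp_continuous_on holomorphic_on_subset[OF hol]\<close>)
    have dd: "(deriv^^1) h \<phi>1 = Dv" using DERIV_imp_deriv[OF hd] by simp
    have ci: "((\<lambda>u. (-\<i>* of_real C)*(h u/(u-\<phi>1)^Suc 1)) has_contour_integral (-\<i>* of_real C)*((2*pi*\<i>)/fact 1 * Dv)) (circlepath 0 1)"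
      using has_contour_integral_lmul[OF Ce] unfolding dd .
    have "((\<lambda>t. \<Phi> (cis t)) has_integral (-\<i>* of_real C)*((2*pi*\<i>)/fact 1 * Dv)) {0..2*pi}"
    proof (rule circ_to_int[OF ci])
      fix z :: complex assume z: "cmod z = 1"
      have "z - \<phi>1 \<noteq> 0" using z assms(1) by auto
      moreover have "1 - a1*z \<noteq> 0" using ne_a z by auto
      ultimately have "G0 z = (-\<i>* of_real C)*(h z/(z-\<phi>1)^Suc 1)"
        unfolding G0_def h_def a21 True[symmetric]
        by (rule alg_pf_e)
      thus "\<Phi> z = (-\<i>* of_real C)*(h z/(z-\<phi>1)^Suc 1) * z * \<i>"
        unfolding PG0[OF z] by simp
    qed
    hence E: "integral\<^sup>L M (\<lambda>\<omega>. Z \<omega> ^ n) = (-\<i>* of_real C)*((2*pi*\<i>)/fact 1 * Dv)"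
      unfolding \<Phi>_def by (rule expect_eq[OF assms(4) dnn dm dc])
    define aa where "aa = 1 - a1*\<phi>1"
    define ff where "ff = 1 + a1*\<phi>1"
    have aa0: "aa \<noteq> 0" unfolding aa_def using ne_a(1)[of \<phi>1] assms(1) by simp
    have ff0: "ff \<noteq> 0"
    proof
      assume "ff = 0"
      hence e: "a1*\<phi>1 = -1" unfolding ff_def by (simp add: eq_neg_iff_add_eq_0 add.commute)
      have "1 - \<phi>1*a1*(\<phi>2*a2) = 1 - (a1*\<phi>1)*(a1*\<phi>1)" unfolding True a21 by (simp add: mult_ac)
      also have "\<dots> = 0" unfolding e by simp
      finally show False using ee0 by simp
    qed
    have "(-\<i>* of_real C)*((2*pi*\<i>)/fact 1 * Dv) = complex_of_real (2*pi*C) * Dv" by simp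
    also have "\<dots> = aa*aa*(aa*aa)/(aa*ff) * ((of_nat (n+1)*\<phi>1^n*aa^2 + (\<phi>1*\<phi>1^n)*(2*aa*a1))/((aa^2)^2))"
    proof -
      have den: "1 - \<phi>1*a1*(\<phi>1*a1) = aa*ff" unfolding aa_def ff_def by (simp add: algebra_simps)
      have tw: "complex_of_real (2*pi*C) = aa*aa*(aa*aa)/(aa*ff)"
        using twopiC[unfolded True[symmetric] a21] by (simp only: den aa_def[symmetric])
      have dv: "Dv = (of_nat (n+1)*\<phi>1^n*aa^2 + (\<phi>1*\<phi>1^n)*(2*aa*a1))/((aa^2)^2)"
        unfolding Dv_def aa_def[symmetric] by simp
      show ?thesis unfolding tw dv ..
    qed
    also have "\<dots> = (of_nat (n+1)*aa + 2*\<phi>1*a1) * \<phi>1^n / ff"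
      by (rule alg_gen_e[OF aa0 ff0])
    also have "\<dots> = (1 + of_nat n + (1 - of_nat n) * (cmod \<phi>1)^2) / (1 + (cmod \<phi>1)^2) * \<phi>1 ^ n"
      unfolding aa_def ff_def a1_def
      by (simp add: algebra_simps norm_sq_c)
    finally show ?thesis using E True by simp
  qed
qed
end
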